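(* For any finite abstract simplicial complex $G$, $\sum_{x\in G}\omega(x)\chi(S(x))=0$.
   Context: A finite abstract simplicial complex $G$ is a finite set of non-empty finite sets closed under taking non-empty subsets; $\omega(x)=(-1)^{|x|-1}$. The graph $G_1$ has vertex set $G$, with $x\neq y$ adjacent iff $x\subset y$ or $y\subset x$. $S(x)=\{y\in G: y\subsetneq x\text{ or }x\subsetneq y\}$, and $\chi(S(x))$ is the Euler characteristic $\sum_K(-1)^{|K|-1}$ over non-empty cliques $K$ of the subgraph of $G_1$ induced on $S(x)$. *)

theory Defs
  imports Main
begin

definition simplicial_complex :: "'a set set \<Rightarrow> bool" where
  "simplicial_complex G \<longleftrightarrow> finite G \<and>
     (\<forall>x\<in>G. finite x \<and> x \<noteq> {} \<and> (\<forall>y. y \<subseteq> x \<and> y \<noteq> {} \<longrightarrow> y \<in> G))"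

definition omega :: "'a set \<Rightarrow> int" where
  "omega x = (-1) ^ (card x - 1)"

definition adj1 :: "'a set \<Rightarrow> 'a set \<Rightarrow> bool" where
  "adj1 x y \<longleftrightarrow> x \<noteq> y \<and> (x \<subseteq> y \<or> y \<subseteq> x)"

definition unit_sphere :: "'a set set \<Rightarrow> 'a set \<Rightarrow> 'a set set" where
  "unit_sphere G x = {y \<in> G. y \<subset> x \<or> x \<subset> y}"

definition cliques :: "'a set set \<Rightarrow> 'a set set set" where
  "cliques V = {K. K \<subseteq> V \<and> K \<noteq> {} \<and> finite K \<and>
                  (\<forall>u\<in>K. \<forall>v\<in>K. u \<noteq> v \<longrightarrow> adj1 u v)}"

definition euler_char :: "'a set set \<Rightarrow> int" where
  "euler_char V = (\<Sum>K\<in>cliques V. (-1) ^ (card K - 1))"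

end

theory Submission
  imports Defs
begin

definition chs :: "'a set set \<Rightarrow> 'a set set set" where
  "chs G = {C. C \<subseteq> G \<and> (\<forall>u\<in>C. \<forall>v\<in>C. u \<subseteq> v \<or> v \<subseteq> u)}"

definition Dn :: "'a set set \<Rightarrow> 'a set \<Rightarrow> 'a set set set" where
  "Dn G x = {L \<in> chs G. \<forall>c\<in>L. c \<subset> x}"

definition Up :: "'a set set \<Rightarrow> 'a set \<Rightarrow> 'a set set set" where
  "Up G x = {U \<in> chs G. \<forall>c\<in>U. x \<subset> c}"

definition Ex :: "'a set set \<Rightarrow> 'a set \<Rightarrow> 'a set set set" where
  "Ex G x = {K \<in> chs G. \<forall>c\<in>K. c \<subset> x \<or> x \<subset> c}"

lemma finite_chs: "finite G \<Longrightarrow> finite (chs G)"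
  by (rule finite_subset[of _ "Pow G"]) (auto simp: chs_def)

lemma finite_chs_mem: "finite G \<Longrightarrow> C \<in> chs G \<Longrightarrow> finite C"
  by (auto simp: chs_def intro: finite_subset)

lemma chain_max:
  assumes "finite C" "C \<noteq> {}" "\<forall>u\<in>C. \<forall>v\<in>C. u \<subseteq> v \<or> v \<subseteq> (u::'a set)"
  shows "\<exists>y\<in>C. \<forall>c\<in>C. c \<subseteq> y"
  using assms
proof (induction C rule: finite_ne_induct)
  case (singleton x)
  then show ?case by auto
next
  case (insert x F)
  then obtain y where y: "y \<in> F" "\<forall>c\<in>F. c \<subseteq> y" by auto
  have "x \<subseteq> y \<or> y \<subseteq> x" using insert.prems y(1) by auto
  then show ?case
  proof
    assume "x \<subseteq> y" then show ?thesis using y by auto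
  next
    assume "y \<subseteq> x" then show ?thesis using y by auto
  qed
qed

lemma chain_min:
  assumes "finite C" "C \<noteq> {}" "\<forall>u\<in>C. \<forall>v\<in>C. u \<subseteq> v \<or> v \<subseteq> (u::'a set)"
  shows "\<exists>y\<in>C. \<forall>c\<in>C. y \<subseteq> c"
  using assms
proof (induction C rule: finite_ne_induct)
  case (singleton x)
  then show ?case by auto
next
  case (insert x F)
  then obtain y where y: "y \<in> F" "\<forall>c\<in>F. y \<subseteq> c" by auto
  have "x \<subseteq> y \<or> y \<subseteq> x" using insert.prems y(1) by auto
  then show ?case
  proof
    assume "x \<subseteq> y" then show ?thesis using y by auto
  next
    assume "y \<subseteq> x" then show ?thesis using y by auto
  qed
qed

lemma max_decomp:
  assumes G: "finite G"
  shows "(\<Sum>C\<in>{C\<in>chs G. C \<noteq> {} \<and> (\<forall>c\<in>C. P c)}. h C) =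
         (\<Sum>y\<in>{y\<in>G. P y}. \<Sum>L\<in>{L\<in>Dn G y. \<forall>c\<in>L. P c}. h (insert y L))"
proof -
  let ?A = "{y\<in>G. P y}"
  let ?B = "\<lambda>y. {L\<in>Dn G y. \<forall>c\<in>L. P c}"
  let ?f = "\<lambda>(y, L). insert y L"
  have "(\<Sum>y\<in>?A. \<Sum>L\<in>?B y. h (insert y L)) = (\<Sum>(y,L)\<in>Sigma ?A ?B. h (insert y L))"
    by (rule sum.Sigma) (use G finite_chs in \<open>auto simp: Dn_def intro: finite_subset[OF _ finite_chs[OF G]]\<close>)
  also have "\<dots> = (\<Sum>C\<in>{C\<in>chs G. C \<noteq> {} \<and> (\<forall>c\<in>C. P c)}. h C)"
  proof -
    have bij: "bij_betw ?f (Sigma ?A ?B) {C\<in>chs G. C \<noteq> {} \<and> (\<forall>c\<in>C. P c)}"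
      unfolding bij_betw_def
    proof
      show "inj_on ?f (Sigma ?A ?B)"
      proof (rule inj_onI, clarsimp)
        fix y L y' L'
        assume a: "y \<in> G" "P y" "L \<in> Dn G y" "\<forall>c\<in>L. P c" "y' \<in> G" "P y'" "L' \<in> Dn G y'"
          "\<forall>c\<in>L'. P c" "insert y L = insert y' L'"
        have yy: "y = y'"
        proof (rule ccontr)
          assume "y \<noteq> y'"
          then have "y' \<in> L" "y \<in> L'" using a(9) by blast+
          then have "y' \<subset> y" "y \<subset> y'" using a(3,7) by (auto simp: Dn_def)
          then show False by auto
        qed
        have "y \<notin> L" "y' \<notin> L'" using a(3,7) by (auto simp: Dn_def)
        then have "L = L'" using a(9) yy by (metis insert_ident)
        then show "y = y' \<and> L = L'" using yy by auto
      qed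
    next
      show "?f ` Sigma ?A ?B = {C\<in>chs G. C \<noteq> {} \<and> (\<forall>c\<in>C. P c)}"
      proof
        show "?f ` Sigma ?A ?B \<subseteq> {C\<in>chs G. C \<noteq> {} \<and> (\<forall>c\<in>C. P c)}"
          by (auto simp: Dn_def chs_def)
      next
        show "{C\<in>chs G. C \<noteq> {} \<and> (\<forall>c\<in>C. P c)} \<subseteq> ?f ` Sigma ?A ?B"
        proof
          fix C assume C: "C \<in> {C\<in>chs G. C \<noteq> {} \<and> (\<forall>c\<in>C. P c)}"
          then have fC: "finite C" using G finite_chs_mem by blast
          obtain y where y: "y \<in> C" "\<forall>c\<in>C. c \<subseteq> y"
            using chain_max[OF fC] C by (auto simp: chs_def)
          have "(y, C - {y}) \<in> Sigma ?A ?B"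
            using C y by (auto simp: Dn_def chs_def)
          moreover have "C = ?f (y, C - {y})" using y by auto
          ultimately show "C \<in> ?f ` Sigma ?A ?B" by blast
        qed
      qed
    qed
    show ?thesis using sum.reindex_bij_betw[OF bij, of h] by (simp add: case_prod_unfold)
  qed
  finally show ?thesis by simp
qed

lemma min_decomp:
  assumes G: "finite G"
  shows "(\<Sum>C\<in>{C\<in>chs G. C \<noteq> {}}. h C) = (\<Sum>y\<in>G. \<Sum>U\<in>Up G y. h (insert y U))"
proof -
  let ?A = "G"
  let ?B = "\<lambda>y. Up G y"
  let ?f = "\<lambda>(y, L). insert y L"
  have "(\<Sum>y\<in>?A. \<Sum>L\<in>?B y. h (insert y L)) = (\<Sum>(y,L)\<in>Sigma ?A ?B. h (insert y L))"
    by (rule sum.Sigma) (use G finite_chs in \<open>auto simp: Up_def intro: finite_subset[OF _ finite_chs[OF G]]\<close>)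
  also have "\<dots> = (\<Sum>C\<in>{C\<in>chs G. C \<noteq> {}}. h C)"
  proof -
    have bij: "bij_betw ?f (Sigma ?A ?B) {C\<in>chs G. C \<noteq> {}}"
      unfolding bij_betw_def
    proof
      show "inj_on ?f (Sigma ?A ?B)"
      proof (rule inj_onI, clarsimp)
        fix y L y' L'
        assume a: "y \<in> G" "L \<in> Up G y" "y' \<in> G" "L' \<in> Up G y'"
          "insert y L = insert y' L'"
        have yy: "y = y'"
        proof (rule ccontr)
          assume "y \<noteq> y'"
          then have "y' \<in> L" "y \<in> L'" using a(5) by blast+
          then have "y \<subset> y'" "y' \<subset> y" using a(2,4) by (auto simp: Up_def)
          then show False by auto
        qed
        have "y \<notin> L" "y' \<notin> L'" using a(2,4) by (auto simp: Up_def)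
        then have "L = L'" using a(5) yy by (metis insert_ident)
        then show "y = y' \<and> L = L'" using yy by auto
      qed
    next
      show "?f ` Sigma ?A ?B = {C\<in>chs G. C \<noteq> {}}"
      proof
        show "?f ` Sigma ?A ?B \<subseteq> {C\<in>chs G. C \<noteq> {}}"
          by (auto simp: Up_def chs_def)
      next
        show "{C\<in>chs G. C \<noteq> {}} \<subseteq> ?f ` Sigma ?A ?B"
        proof
          fix C assume C: "C \<in> {C\<in>chs G. C \<noteq> {}}"
          then have fC: "finite C" using G finite_chs_mem by blast
          obtain y where y: "y \<in> C" "\<forall>c\<in>C. y \<subseteq> c"
            using chain_min[OF fC] C by (auto simp: chs_def)
          have "(y, C - {y}) \<in> Sigma ?A ?B"
            using C y by (auto simp: Up_def chs_def)
          moreover have "C = ?f (y, C - {y})" using y by auto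
          ultimately show "C \<in> ?f ` Sigma ?A ?B" by blast
        qed
      qed
    qed
    show ?thesis using sum.reindex_bij_betw[OF bij, of h] by (simp add: case_prod_unfold)
  qed
  finally show ?thesis by simp
qed

lemma split_decomp:
  assumes G: "finite G"
  shows "(\<Sum>K\<in>Ex G x. (-1::int) ^ card K) =
         (\<Sum>L\<in>Dn G x. (-1::int) ^ card L) * (\<Sum>U\<in>Up G x. (-1::int) ^ card U)"
proof -
  let ?f = "\<lambda>(L, U). L \<union> U"
  have fD: "finite (Dn G x)" and fU: "finite (Up G x)"
    by (auto simp: Dn_def Up_def intro: finite_subset[OF _ finite_chs[OF G]])
  have bij: "bij_betw ?f (Dn G x \<times> Up G x) (Ex G x)"
    unfolding bij_betw_def
  proof
    show "inj_on ?f (Dn G x \<times> Up G x)"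
    proof (rule inj_onI, clarsimp)
      fix L U L' U'
      assume a: "L \<in> Dn G x" "U \<in> Up G x" "L' \<in> Dn G x" "U' \<in> Up G x" "L \<union> U = L' \<union> U'"
      have "L = {c \<in> L \<union> U. c \<subset> x}" using a(1,2) by (auto simp: Dn_def Up_def)
      also have "\<dots> = {c \<in> L' \<union> U'. c \<subset> x}" using a(5) by (simp only:)
      also have "\<dots> = L'" using a(3,4) by (auto simp: Dn_def Up_def)
      finally have 1: "L = L'" .
      have "U = {c \<in> L \<union> U. x \<subset> c}" using a(1,2) by (auto simp: Dn_def Up_def)
      also have "\<dots> = {c \<in> L' \<union> U'. x \<subset> c}" using a(5) by (simp only:)
      also have "\<dots> = U'" using a(3,4) by (auto simp: Dn_def Up_def)
      finally show "L = L' \<and> U = U'" using 1 by simp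
    qed
  next
    show "?f ` (Dn G x \<times> Up G x) = Ex G x"
    proof
      show "?f ` (Dn G x \<times> Up G x) \<subseteq> Ex G x"
      proof clarify
        fix L U assume a: "L \<in> Dn G x" "U \<in> Up G x"
        have "\<forall>u\<in>L \<union> U. \<forall>v\<in>L \<union> U. u \<subseteq> v \<or> v \<subseteq> u"
        proof (intro ballI)
          fix u v assume "u \<in> L \<union> U" "v \<in> L \<union> U"
          moreover have hL: "\<forall>u\<in>L. u \<subset> x" and hU: "\<forall>v\<in>U. x \<subset> v"
            and cL: "\<forall>u\<in>L. \<forall>v\<in>L. u \<subseteq> v \<or> v \<subseteq> u" and cU: "\<forall>u\<in>U. \<forall>v\<in>U. u \<subseteq> v \<or> v \<subseteq> u"
            using a by (auto simp: Dn_def Up_def chs_def)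
          ultimately show "u \<subseteq> v \<or> v \<subseteq> u"
            by (metis Un_iff psubset_imp_subset subset_trans)
        qed
        then show "L \<union> U \<in> Ex G x" using a by (auto simp: Dn_def Up_def chs_def Ex_def)
      qed
    next
      show "Ex G x \<subseteq> ?f ` (Dn G x \<times> Up G x)"
      proof
        fix K assume K: "K \<in> Ex G x"
        have "({c \<in> K. c \<subset> x}, {c \<in> K. x \<subset> c}) \<in> Dn G x \<times> Up G x"
          using K by (auto simp: Dn_def Up_def chs_def Ex_def)
        moreover have "K = ?f ({c \<in> K. c \<subset> x}, {c \<in> K. x \<subset> c})" using K by (auto simp: Ex_def)
        ultimately show "K \<in> ?f ` (Dn G x \<times> Up G x)" by blast
      qed
    qed
  qed
  have "(\<Sum>K\<in>Ex G x. (-1::int) ^ card K) = (\<Sum>p\<in>Dn G x \<times> Up G x. (-1::int) ^ card (?f p))"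
    using sum.reindex_bij_betw[OF bij, of "\<lambda>K. (-1::int) ^ card K"] by simp
  also have "\<dots> = (\<Sum>p\<in>Dn G x \<times> Up G x. (-1::int) ^ card (fst p) * (-1) ^ card (snd p))"
  proof (rule sum.cong[OF refl])
    fix p assume p: "p \<in> Dn G x \<times> Up G x"
    obtain L U where LU: "p = (L, U)" by (cases p)
    have "finite L" "finite U" using p LU G finite_chs_mem by (auto simp: Dn_def Up_def)
    moreover have "L \<inter> U = {}" using p LU by (auto simp: Dn_def Up_def)
    ultimately have "card (L \<union> U) = card L + card U" by (simp add: card_Un_disjoint)
    then show "(-1::int) ^ card (?f p) = (-1) ^ card (fst p) * (-1) ^ card (snd p)"
      using LU by (simp add: power_add)
  qed
  also have "\<dots> = (\<Sum>L\<in>Dn G x. \<Sum>U\<in>Up G x. (-1::int) ^ card L * (-1) ^ card U)"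
    by (simp add: sum.cartesian_product case_prod_unfold)
  also have "\<dots> = (\<Sum>L\<in>Dn G x. (-1::int) ^ card L) * (\<Sum>U\<in>Up G x. (-1::int) ^ card U)"
    by (simp add: sum_product)
  finally show ?thesis .
qed

lemma alt_pow: "finite x \<Longrightarrow> (\<Sum>y\<in>Pow x. (-1::int) ^ card y) = (if x = {} then 1 else 0)"
proof (induction x rule: finite_induct)
  case empty
  then show ?case by simp
next
  case (insert a B)
  have inj: "inj_on (insert a) (Pow B)"
  proof (rule inj_onI)
    fix u v assume uv: "u \<in> Pow B" "v \<in> Pow B" "insert a u = insert a v"
    then have "a \<notin> u" "a \<notin> v" using insert.hyps(2) by auto
    then show "u = v" using uv(3) by (metis insert_ident)
  qed
  have disj: "Pow B \<inter> insert a ` Pow B = {}" using insert.hyps(2) by auto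
  have "(\<Sum>y\<in>Pow (insert a B). (-1::int) ^ card y)
      = (\<Sum>y\<in>Pow B. (-1::int) ^ card y) + (\<Sum>y\<in>insert a ` Pow B. (-1::int) ^ card y)"
    unfolding Pow_insert using insert.hyps(1) disj by (simp add: sum.union_disjoint)
  also have "(\<Sum>y\<in>insert a ` Pow B. (-1::int) ^ card y) = (\<Sum>y\<in>Pow B. (-1::int) ^ card (insert a y))"
    using inj by (simp add: sum.reindex)
  also have "\<dots> = (\<Sum>y\<in>Pow B. - ((-1::int) ^ card y))"
  proof (rule sum.cong[OF refl])
    fix y assume "y \<in> Pow B"
    then have "finite y" "a \<notin> y" using insert.hyps finite_subset by auto
    then show "(-1::int) ^ card (insert a y) = - ((-1) ^ card y)" by simp
  qed
  finally show ?case by (simp add: sum_negf)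
qed

lemma lemmaA:
  assumes SC: "simplicial_complex G" and x: "x \<in> G"
  shows "(\<Sum>L\<in>Dn G x. (-1::int) ^ card L) = omega x"
  using x
proof (induction "card x" arbitrary: x rule: less_induct)
  case less
  have G: "finite G" using SC by (simp add: simplicial_complex_def)
  have fx: "finite x" and nx: "x \<noteq> {}" using SC less.prems by (auto simp: simplicial_complex_def)
  have fD: "finite (Dn G x)"
    by (auto simp: Dn_def intro: finite_subset[OF _ finite_chs[OF G]])
  have e: "{} \<in> Dn G x" by (auto simp: Dn_def chs_def)
  have "(\<Sum>L\<in>Dn G x. (-1::int) ^ card L) = 1 + (\<Sum>L\<in>Dn G x - {{}}. (-1::int) ^ card L)"
    using sum.remove[OF fD e, of "\<lambda>L. (-1::int) ^ card L"] by simp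
  also have "Dn G x - {{}} = {C\<in>chs G. C \<noteq> {} \<and> (\<forall>c\<in>C. c \<subset> x)}" by (auto simp: Dn_def)
  also have "(\<Sum>L\<in>{C\<in>chs G. C \<noteq> {} \<and> (\<forall>c\<in>C. c \<subset> x)}. (-1::int) ^ card L)
      = (\<Sum>y\<in>{y\<in>G. y \<subset> x}. \<Sum>L\<in>{L\<in>Dn G y. \<forall>c\<in>L. c \<subset> x}. (-1::int) ^ card (insert y L))"
    by (rule max_decomp[OF G])
  also have "\<dots> = (\<Sum>y\<in>{y\<in>G. y \<subset> x}. - omega y)"
  proof (rule sum.cong[OF refl])
    fix y assume y: "y \<in> {y\<in>G. y \<subset> x}"
    have "{L\<in>Dn G y. \<forall>c\<in>L. c \<subset> x} = Dn G y" using y by (auto simp: Dn_def)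
    moreover have "(\<Sum>L\<in>Dn G y. (-1::int) ^ card (insert y L)) = (\<Sum>L\<in>Dn G y. - ((-1::int) ^ card L))"
    proof (rule sum.cong[OF refl])
      fix L assume L: "L \<in> Dn G y"
      then have "finite L" "y \<notin> L" using G finite_chs_mem by (auto simp: Dn_def)
      then show "(-1::int) ^ card (insert y L) = - ((-1) ^ card L)" by simp
    qed
    moreover have "card y < card x" using y fx by (simp add: psubset_card_mono)
    ultimately show "(\<Sum>L\<in>{L\<in>Dn G y. \<forall>c\<in>L. c \<subset> x}. (-1::int) ^ card (insert y L)) = - omega y"
      using less.hyps[of y] y by (simp add: sum_negf)
  qed
  also have "{y\<in>G. y \<subset> x} = Pow x - {{}, x}"
  proof -
    have SCx: "\<forall>y. y \<subseteq> x \<and> y \<noteq> {} \<longrightarrow> y \<in> G" and SCne: "\<forall>y\<in>G. y \<noteq> {}"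
      using SC less.prems unfolding simplicial_complex_def by blast+
    then show ?thesis by blast
  qed
  also have "(\<Sum>y\<in>Pow x - {{}, x}. - omega y) = (\<Sum>y\<in>Pow x - {{}, x}. (-1::int) ^ card y)"
  proof (rule sum.cong[OF refl])
    fix y assume y: "y \<in> Pow x - {{}, x}"
    then have "finite y" "y \<noteq> {}" using fx finite_subset by auto
    then obtain n where "card y = Suc n" by (metis card_eq_0_iff not0_implies_Suc)
    then show "- omega y = (-1::int) ^ card y" by (simp add: omega_def)
  qed
  also have "\<dots> = (\<Sum>y\<in>Pow x. (-1::int) ^ card y) - (\<Sum>y\<in>{{}, x}. (-1::int) ^ card y)"
    by (rule sum_diff) (use fx in auto)
  also have "\<dots> = - 1 - (-1) ^ card x" using alt_pow[OF fx] nx fx by simp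
  finally have "(\<Sum>L\<in>Dn G x. (-1::int) ^ card L) = - ((-1) ^ card x)" by simp
  moreover obtain n where "card x = Suc n" using fx nx by (metis card_eq_0_iff not0_implies_Suc)
  ultimately show ?case by (simp add: omega_def)
qed

theorem mainTheorem12:
  fixes G :: "'a set set"
  assumes "simplicial_complex G"
  shows "(\<Sum>x\<in>G. omega x * euler_char (unit_sphere G x)) = 0"
proof -
  have G: "finite G" using assms by (simp add: simplicial_complex_def)
  define g where "g x = (\<Sum>U\<in>Up G x. (-1::int) ^ card U)" for x
  have om2: "omega x * omega x = 1" for x :: "'a set"
    by (simp add: omega_def flip: power_add)
  have ec: "euler_char (unit_sphere G x) = 1 - omega x * g x" if x: "x \<in> G" for x
  proof -
    have fE: "finite (Ex G x)"
      by (auto simp: Ex_def intro: finite_subset[OF _ finite_chs[OF G]])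
    have e: "{} \<in> Ex G x" by (auto simp: Ex_def chs_def)
    have cl: "cliques (unit_sphere G x) = Ex G x - {{}}"
      using G by (auto simp: cliques_def unit_sphere_def Ex_def chs_def adj1_def intro: finite_subset)
    have "euler_char (unit_sphere G x) = (\<Sum>K\<in>Ex G x - {{}}. - ((-1::int) ^ card K))"
      unfolding euler_char_def cl
    proof (rule sum.cong[OF refl])
      fix K assume K: "K \<in> Ex G x - {{}}"
      then have "finite K" "K \<noteq> {}" using G finite_chs_mem by (auto simp: Ex_def)
      then obtain n where "card K = Suc n" by (metis card_eq_0_iff not0_implies_Suc)
      then show "(-1::int) ^ (card K - 1) = - ((-1) ^ card K)" by simp
    qed
    also have "\<dots> = - ((\<Sum>K\<in>Ex G x. (-1::int) ^ card K) - 1)"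
      using sum.remove[OF fE e, of "\<lambda>K. (-1::int) ^ card K"] by (simp add: sum_negf)
    also have "\<dots> = 1 - omega x * g x"
      using split_decomp[OF G, of x] lemmaA[OF assms x] by (simp add: g_def)
    finally show ?thesis .
  qed
  have "(\<Sum>x\<in>G. omega x * euler_char (unit_sphere G x)) = (\<Sum>x\<in>G. omega x - g x)"
    by (rule sum.cong[OF refl]) (simp add: ec right_diff_distrib mult.assoc[symmetric] om2)
  also have "\<dots> = (\<Sum>x\<in>G. omega x) - (\<Sum>x\<in>G. g x)" by (simp add: sum_subtractf)
  also have "(\<Sum>x\<in>G. g x) = - (\<Sum>C\<in>{C\<in>chs G. C \<noteq> {}}. (-1::int) ^ card C)"
  proof -
    have "(\<Sum>C\<in>{C\<in>chs G. C \<noteq> {}}. (-1::int) ^ card C) = (\<Sum>y\<in>G. \<Sum>U\<in>Up G y. (-1::int) ^ card (insert y U))"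
      by (rule min_decomp[OF G])
    also have "\<dots> = (\<Sum>y\<in>G. - g y)"
    proof (rule sum.cong[OF refl])
      fix y assume "y \<in> G"
      have "(\<Sum>U\<in>Up G y. (-1::int) ^ card (insert y U)) = (\<Sum>U\<in>Up G y. - ((-1::int) ^ card U))"
      proof (rule sum.cong[OF refl])
        fix L assume L: "L \<in> Up G y"
        then have "finite L" "y \<notin> L" using G finite_chs_mem by (auto simp: Up_def)
        then show "(-1::int) ^ card (insert y L) = - ((-1) ^ card L)" by simp
      qed
      then show "(\<Sum>U\<in>Up G y. (-1::int) ^ card (insert y U)) = - g y" by (simp add: g_def sum_negf)
    qed
    finally show ?thesis by (simp add: sum_negf)
  qed
  also have "(\<Sum>C\<in>{C\<in>chs G. C \<noteq> {}}. (-1::int) ^ card C) = - (\<Sum>x\<in>G. omega x)"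
  proof -
    have "(\<Sum>C\<in>{C\<in>chs G. C \<noteq> {} \<and> (\<forall>c\<in>C. True)}. (-1::int) ^ card C)
        = (\<Sum>y\<in>{y\<in>G. True}. \<Sum>L\<in>{L\<in>Dn G y. \<forall>c\<in>L. True}. (-1::int) ^ card (insert y L))"
      by (rule max_decomp[OF G])
    also have "\<dots> = (\<Sum>y\<in>G. - omega y)"
    proof (rule sum.cong)
      fix y assume y: "y \<in> G"
      have "(\<Sum>L\<in>Dn G y. (-1::int) ^ card (insert y L)) = (\<Sum>L\<in>Dn G y. - ((-1::int) ^ card L))"
      proof (rule sum.cong[OF refl])
        fix L assume L: "L \<in> Dn G y"
        then have "finite L" "y \<notin> L" using G finite_chs_mem by (auto simp: Dn_def)
        then show "(-1::int) ^ card (insert y L) = - ((-1) ^ card L)" by simp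
      qed
      then show "(\<Sum>L\<in>{L\<in>Dn G y. \<forall>c\<in>L. True}. (-1::int) ^ card (insert y L)) = - omega y"
        using lemmaA[OF assms y] by (simp add: sum_negf)
    qed simp
    finally show ?thesis by (simp add: sum_negf)
  qed
  finally show ?thesis by simp
qed

end
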